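(* Let $(X,(\cdot,\cdot|\cdot))$ be a 2-inner product space over $\mathbb{K}\in\{\mathbb{R},\mathbb{C}\}$, let $n$ be a positive integer, and let $x,y_1,\dots,y_n,z\in X$. Then \[ \sum_{i=1}^{n}\left|(x,y_i|z)\right|^2\le \|x|z\|^2\left\{\max_{1\le i\le n}\|y_i|z\|^2+\Big(\sum_{1\le i\ne j\le n}\left|(y_i,y_j|z)\right|^2\Big)^{1/2}\right\}. \]
   Context: A 2-inner product on a linear space $X$ of dimension greater than $1$ over $\mathbb{K}$ ($\mathbb{K}=\mathbb{R}$ or $\mathbb{C}$) is a function $(\cdot,\cdot|\cdot):X\times X\times X\to\mathbb{K}$ such that for all $x,x',y,z\in X$ and $\alpha\in\mathbb{K}$: (i) $(x,x|z)\ge 0$, and $(x,x|z)=0$ iff $x$ and $z$ are linearly dependent; (ii) $(x,x|z)=(z,z|x)$; (iii) $(y,x|z)=\overline{(x,y|z)}$; (iv) $(\alpha x,y|z)=\alpha(x,y|z)$; (v) $(x+x',y|z)=(x,y|z)+(x',y|z)$. The associated 2-norm is $\|x|z\|=\sqrt{(x,x|z)}$. The sum $\sum_{1\le i\ne j\le n}$ runs over all ordered pairs $(i,j)$ with $i,j\in\{1,\dots,n\}$, $i\ne j$. *)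

theory Defs
  imports "HOL-Analysis.Analysis"
begin

definition lin_dep2 :: "('k::field \<Rightarrow> 'a::ab_group_add \<Rightarrow> 'a) \<Rightarrow> 'a \<Rightarrow> 'a \<Rightarrow> bool" where
  "lin_dep2 smul x z \<longleftrightarrow> (\<exists>a b. (a \<noteq> 0 \<or> b \<noteq> 0) \<and> smul a x + smul b z = 0)"

text \<open>Generic 2-inner product axioms: cj is the conjugation of the scalar field,
  nonneg the predicate "is a nonnegative real number".  Includes: X is a vector space
  over the scalars of dimension greater than 1.\<close>
definition two_ip_axioms ::
  "('k::field \<Rightarrow> 'a::ab_group_add \<Rightarrow> 'a) \<Rightarrow> ('k \<Rightarrow> 'k) \<Rightarrow> ('k \<Rightarrow> bool)
     \<Rightarrow> ('a \<Rightarrow> 'a \<Rightarrow> 'a \<Rightarrow> 'k) \<Rightarrow> bool" where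
  "two_ip_axioms smul cj nonneg ip \<longleftrightarrow>
     vector_space smul \<and>
     (\<exists>u v. \<not> lin_dep2 smul u v) \<and>
     (\<forall>x z. nonneg (ip x x z)) \<and>
     (\<forall>x z. ip x x z = 0 \<longleftrightarrow> lin_dep2 smul x z) \<and>
     (\<forall>x z. ip x x z = ip z z x) \<and>
     (\<forall>x y z. ip y x z = cj (ip x y z)) \<and>
     (\<forall>a x y z. ip (smul a x) y z = a * ip x y z) \<and>
     (\<forall>x x' y z. ip (x + x') y z = ip x y z + ip x' y z)"

definition real_2ip :: "(real \<Rightarrow> 'a::ab_group_add \<Rightarrow> 'a) \<Rightarrow> ('a \<Rightarrow> 'a \<Rightarrow> 'a \<Rightarrow> real) \<Rightarrow> bool" where
  "real_2ip smul ip \<longleftrightarrow> two_ip_axioms smul (\<lambda>r. r) (\<lambda>r. r \<ge> 0) ip"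

definition complex_2ip :: "(complex \<Rightarrow> 'a::ab_group_add \<Rightarrow> 'a) \<Rightarrow> ('a \<Rightarrow> 'a \<Rightarrow> 'a \<Rightarrow> complex) \<Rightarrow> bool" where
  "complex_2ip smul ip \<longleftrightarrow> two_ip_axioms smul cnj (\<lambda>c. c \<in> \<real> \<and> Re c \<ge> 0) ip"

definition r2norm :: "('a \<Rightarrow> 'a \<Rightarrow> 'a \<Rightarrow> real) \<Rightarrow> 'a \<Rightarrow> 'a \<Rightarrow> real" where
  "r2norm ip x z = sqrt (ip x x z)"

definition c2norm :: "('a \<Rightarrow> 'a \<Rightarrow> 'a \<Rightarrow> complex) \<Rightarrow> 'a \<Rightarrow> 'a \<Rightarrow> real" where
  "c2norm ip x z = sqrt (Re (ip x x z))"

end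

theory Submission
  imports Defs
begin

lemma key_real:
  fixes N S W K :: real
  assumes q: "\<And>t. 0 \<le> N - 2*t*S + t^2*W" and "W \<le> S*K" "0 \<le> S" "0 \<le> K"
  shows "S \<le> N*K"
proof -
  have N0: "0 \<le> N" using q[of 0] by simp
  show ?thesis
  proof (cases "S = 0")
    case True then show ?thesis using N0 assms by simp
  next
    case Sp: False
    show ?thesis
    proof (cases "K = 0")
      case True
      have "W \<le> 0" using assms True by simp
      have "0 \<le> N - 2*((N+1)/(2*S))*S + ((N+1)/(2*S))^2*W" by (rule q)
      moreover have "((N+1)/(2*S))^2*W \<le> 0" using \<open>W \<le> 0\<close> by (simp add: mult_nonneg_nonpos)
      moreover have "2*((N+1)/(2*S))*S = N+1" using Sp by simp
      ultimately show ?thesis by linarith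
    next
      case False
      hence Kp: "0 < K" using assms by simp
      have "0 \<le> N - 2*(1/K)*S + (1/K)^2*W" by (rule q)
      moreover have "(1/K)^2*W \<le> (1/K)^2*(S*K)" using assms by (simp add: mult_left_mono)
      moreover have "(1/K)^2*(S*K) = S/K" using Kp by (simp add: power2_eq_square)
      ultimately have "S/K \<le> N" by simp
      thus ?thesis using Kp by (simp add: divide_le_eq mult.commute)
    qed
  qed
qed

lemma bound_real:
  fixes c :: "nat \<Rightarrow> real" and g :: "nat \<Rightarrow> nat \<Rightarrow> real" and I :: "nat set"
  assumes fin: "finite I" and M: "\<And>i. i \<in> I \<Longrightarrow> g i i \<le> M"
  shows "(\<Sum>i\<in>I. \<Sum>j\<in>I. c i * c j * g i j) \<le> (\<Sum>i\<in>I. (c i)^2) *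
     (M + sqrt (\<Sum>(i,j)\<in>{(i,j). i \<in> I \<and> j \<in> I \<and> i \<noteq> j}. \<bar>g i j\<bar>^2))"
proof -
  define P where "P = {(i,j). i \<in> I \<and> j \<in> I \<and> i \<noteq> j}"
  define S where "S = (\<Sum>i\<in>I. (c i)^2)"
  define T where "T = (\<Sum>(i,j)\<in>P. \<bar>g i j\<bar>^2)"
  have PS: "P = Sigma I (\<lambda>i. I - {i})" unfolding P_def by auto
  have finP: "finite P" unfolding PS using fin by auto
  have "(\<Sum>i\<in>I. \<Sum>j\<in>I. c i * c j * g i j) = (\<Sum>i\<in>I. c i * c i * g i i + (\<Sum>j\<in>I-{i}. c i * c j * g i j))"
    using fin by (intro sum.cong refl) (simp add: sum.remove)
  also have "\<dots> = (\<Sum>i\<in>I. c i * c i * g i i) + (\<Sum>(i,j)\<in>P. c i * c j * g i j)"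
    unfolding PS using fin by (simp add: sum.distrib sum.Sigma)
  finally have split: "(\<Sum>i\<in>I. \<Sum>j\<in>I. c i * c j * g i j) = (\<Sum>i\<in>I. c i * c i * g i i) + (\<Sum>(i,j)\<in>P. c i * c j * g i j)" .
  have d: "(\<Sum>i\<in>I. c i * c i * g i i) \<le> (\<Sum>i\<in>I. (c i)^2 * M)"
    using M by (intro sum_mono) (simp add: power2_eq_square mult_left_mono)
  have "(\<Sum>(i,j)\<in>P. c i * c j * g i j) = (\<Sum>p\<in>P. (c (fst p) * c (snd p)) * g (fst p) (snd p))"
    by (simp add: case_prod_beta)
  also have "\<dots> \<le> sqrt ((\<Sum>p\<in>P. (c (fst p) * c (snd p))^2) * (\<Sum>p\<in>P. (g (fst p) (snd p))^2))"
    by (rule real_le_rsqrt, rule Cauchy_Schwarz_ineq_sum)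
  also have "\<dots> \<le> sqrt ((S^2) * T)"
  proof -
    have "(\<Sum>p\<in>P. (c (fst p) * c (snd p))^2) \<le> (\<Sum>p\<in>I \<times> I. (c (fst p) * c (snd p))^2)"
      using fin by (intro sum_mono2) (auto simp: P_def)
    also have "\<dots> = S^2"
      unfolding S_def power2_eq_square[of "sum _ _"] sum_product sum.cartesian_product
      by (simp add: power_mult_distrib case_prod_beta)
    finally have a: "(\<Sum>p\<in>P. (c (fst p) * c (snd p))^2) \<le> S^2" .
    have b: "(\<Sum>p\<in>P. (g (fst p) (snd p))^2) = T" unfolding T_def by (simp add: case_prod_beta)
    have "0 \<le> T" unfolding T_def by (simp add: sum_nonneg case_prod_beta)
    then show ?thesis using a b by (simp add: mult_right_mono)
  qed
  also have "\<dots> = S * sqrt T" unfolding S_def by (simp add: real_sqrt_mult sum_nonneg)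
  finally have o: "(\<Sum>(i,j)\<in>P. c i * c j * g i j) \<le> S * sqrt T" .
  have "(\<Sum>i\<in>I. (c i)^2 * M) = S * M" unfolding S_def by (simp add: sum_distrib_right)
  then show ?thesis using split d o unfolding S_def[symmetric] T_def[symmetric] P_def[symmetric]
    by (simp add: distrib_left)
qed


lemma split_diag:
  fixes F :: "nat \<Rightarrow> nat \<Rightarrow> 'c::comm_monoid_add"
  assumes fin: "finite I"
  shows "(\<Sum>i\<in>I. \<Sum>j\<in>I. F i j) = (\<Sum>i\<in>I. F i i) + (\<Sum>(i,j)\<in>{(i,j). i \<in> I \<and> j \<in> I \<and> i \<noteq> j}. F i j)"
proof -
  have PS: "{(i,j). i \<in> I \<and> j \<in> I \<and> i \<noteq> j} = Sigma I (\<lambda>i. I - {i})" by auto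
  have "(\<Sum>i\<in>I. \<Sum>j\<in>I. F i j) = (\<Sum>i\<in>I. F i i + (\<Sum>j\<in>I-{i}. F i j))"
    using fin by (intro sum.cong refl) (simp add: sum.remove)
  also have "\<dots> = (\<Sum>i\<in>I. F i i) + (\<Sum>(i,j)\<in>{(i,j). i \<in> I \<and> j \<in> I \<and> i \<noteq> j}. F i j)"
    unfolding PS using fin by (simp add: sum.distrib sum.Sigma)
  finally show ?thesis .
qed

lemma bound_complex:
  fixes c :: "nat \<Rightarrow> complex" and g :: "nat \<Rightarrow> nat \<Rightarrow> complex" and I :: "nat set"
  assumes fin: "finite I" and M: "\<And>i. i \<in> I \<Longrightarrow> Re (g i i) \<le> M"
  shows "Re (\<Sum>i\<in>I. \<Sum>j\<in>I. c i * cnj (c j) * g i j) \<le> (\<Sum>i\<in>I. (cmod (c i))^2) *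
     (M + sqrt (\<Sum>(i,j)\<in>{(i,j). i \<in> I \<and> j \<in> I \<and> i \<noteq> j}. (cmod (g i j))^2))"
proof -
  define P where "P = {(i,j). i \<in> I \<and> j \<in> I \<and> i \<noteq> j}"
  define a where "a i = cmod (c i)" for i
  define h where "h i j = (if i = j then Re (g i i) else cmod (g i j))" for i j
  have "Re (\<Sum>i\<in>I. \<Sum>j\<in>I. c i * cnj (c j) * g i j) =
     (\<Sum>i\<in>I. Re (c i * cnj (c i) * g i i)) + Re (\<Sum>(i,j)\<in>P. c i * cnj (c j) * g i j)"
    unfolding P_def split_diag[OF fin] by (simp add: Re_sum)
  also have "(\<Sum>i\<in>I. Re (c i * cnj (c i) * g i i)) = (\<Sum>i\<in>I. a i * a i * h i i)"
  proof (intro sum.cong refl)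
    fix i
    have "c i * cnj (c i) = of_real ((cmod (c i))^2)" by (simp add: complex_norm_square del: of_real_power)
    then show "Re (c i * cnj (c i) * g i i) = a i * a i * h i i"
      by (simp add: a_def h_def power2_eq_square)
  qed
  also have "Re (\<Sum>(i,j)\<in>P. c i * cnj (c j) * g i j) \<le> (\<Sum>(i,j)\<in>P. a i * a j * h i j)"
  proof -
    have "Re (\<Sum>(i,j)\<in>P. c i * cnj (c j) * g i j) \<le> cmod (\<Sum>(i,j)\<in>P. c i * cnj (c j) * g i j)"
      by (rule complex_Re_le_cmod)
    also have "\<dots> \<le> (\<Sum>(i,j)\<in>P. cmod (c i * cnj (c j) * g i j))"
      by (rule order_trans[OF norm_sum]) (simp add: case_prod_beta)
    also have "\<dots> = (\<Sum>(i,j)\<in>P. a i * a j * h i j)"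
      by (intro sum.cong refl) (auto simp: P_def a_def h_def norm_mult)
    finally show ?thesis .
  qed
  finally have "Re (\<Sum>i\<in>I. \<Sum>j\<in>I. c i * cnj (c j) * g i j) \<le> (\<Sum>i\<in>I. \<Sum>j\<in>I. a i * a j * h i j)"
    unfolding P_def split_diag[OF fin, of "\<lambda>i j. a i * a j * h i j"] by simp
  also have "\<dots> \<le> (\<Sum>i\<in>I. (a i)^2) * (M + sqrt (\<Sum>(i,j)\<in>P. \<bar>h i j\<bar>^2))"
    unfolding P_def by (rule bound_real[OF fin]) (simp add: h_def M)
  also have "(\<Sum>(i,j)\<in>P. \<bar>h i j\<bar>^2) = (\<Sum>(i,j)\<in>P. (cmod (g i j))^2)"
    by (intro sum.cong refl) (auto simp: P_def h_def)
  finally show ?thesis unfolding a_def P_def .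
qed


lemma bomb_real:
  fixes B :: "'a::ab_group_add \<Rightarrow> 'a \<Rightarrow> real" and smul :: "real \<Rightarrow> 'a \<Rightarrow> 'a"
    and y :: "nat \<Rightarrow> 'a"
  assumes addl: "\<And>x x' y. B (x+x') y = B x y + B x' y"
    and sml: "\<And>a x y. B (smul a x) y = a * B x y"
    and sy: "\<And>x y. B y x = B x y"
    and nn: "\<And>x. 0 \<le> B x x"
    and n: "0 < n"
  shows "(\<Sum>i=1..n. \<bar>B x (y i)\<bar>^2) \<le> B x x * (Max ((\<lambda>i. B (y i) (y i)) ` {1..n})
     + sqrt (\<Sum>(i,j)\<in>{(i,j). i \<in> {1..n} \<and> j \<in> {1..n} \<and> i \<noteq> j}. \<bar>B (y i) (y j)\<bar>^2))"
proof -
  define I where "I = {1..n}"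
  have fin: "finite I" unfolding I_def by simp
  have addr: "B x (u+v) = B x u + B x v" for x u v using addl[of u v x] sy by simp
  have smr: "B x (smul a u) = a * B x u" for x u a using sml[of a u x] sy by simp
  have z0: "B x 0 = 0" for x using addr[of x 0 0] by simp
  have sumr: "B x (sum f A) = (\<Sum>i\<in>A. B x (f i))" for x and f :: "nat \<Rightarrow> 'a" and A
    by (induction A rule: infinite_finite_induct) (simp_all add: z0 addr)
  define c where "c i = B x (y i)" for i
  define S where "S = (\<Sum>i\<in>I. (c i)^2)"
  define w where "w = (\<Sum>i\<in>I. smul (c i) (y i))"
  define M where "M = Max ((\<lambda>i. B (y i) (y i)) ` I)"
  define T where "T = (\<Sum>(i,j)\<in>{(i,j). i \<in> I \<and> j \<in> I \<and> i \<noteq> j}. \<bar>B (y i) (y j)\<bar>^2)"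
  have Bxw: "B x w = S" unfolding w_def S_def sumr smr by (simp add: c_def power2_eq_square)
  have Bww: "B w w = (\<Sum>i\<in>I. \<Sum>j\<in>I. c i * c j * B (y i) (y j))"
  proof -
    have "B w w = (\<Sum>i\<in>I. c i * B w (y i))" unfolding w_def[of] sumr smr ..
    hence "B w w = (\<Sum>i\<in>I. c i * B (y i) w)" using sy by simp
    also have "\<dots> = (\<Sum>i\<in>I. \<Sum>j\<in>I. c i * c j * B (y i) (y j))"
      unfolding w_def sumr smr by (simp add: sum_distrib_left mult.assoc)
    finally show ?thesis .
  qed
  have Mge: "B (y i) (y i) \<le> M" if "i \<in> I" for i unfolding M_def using fin that by simp
  have W: "B w w \<le> S * (M + sqrt T)" unfolding Bww S_def T_def by (rule bound_real[OF fin Mge])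
  have K0: "0 \<le> M + sqrt T"
  proof -
    have "1 \<in> I" using n unfolding I_def by simp
    hence "0 \<le> M" using Mge nn order_trans by blast
    moreover have "0 \<le> T" unfolding T_def by (simp add: sum_nonneg case_prod_beta)
    ultimately show ?thesis by simp
  qed
  have q: "0 \<le> B x x - 2*t*S + t^2 * B w w" for t
  proof -
    have "0 \<le> B (x + smul (-t) w) (x + smul (-t) w)" by (rule nn)
    also have "\<dots> = B x x - 2*t*S + t^2 * B w w"
      unfolding addl addr sml smr using Bxw sy[of x w] by (simp add: algebra_simps power2_eq_square)
    finally show ?thesis .
  qed
  have "S \<le> B x x * (M + sqrt T)"
    by (rule key_real[OF q W]) (use K0 in \<open>simp_all add: S_def sum_nonneg\<close>)
  then show ?thesis unfolding S_def M_def T_def c_def I_def by simp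
qed

lemma bomb_complex:
  fixes B :: "'a::ab_group_add \<Rightarrow> 'a \<Rightarrow> complex" and smul :: "complex \<Rightarrow> 'a \<Rightarrow> 'a"
    and y :: "nat \<Rightarrow> 'a"
  assumes addl: "\<And>x x' y. B (x+x') y = B x y + B x' y"
    and sml: "\<And>a x y. B (smul a x) y = a * B x y"
    and sy: "\<And>x y. B y x = cnj (B x y)"
    and nn: "\<And>x. 0 \<le> Re (B x x)"
    and n: "0 < n"
  shows "(\<Sum>i=1..n. (cmod (B x (y i)))^2) \<le> Re (B x x) * (Max ((\<lambda>i. Re (B (y i) (y i))) ` {1..n})
     + sqrt (\<Sum>(i,j)\<in>{(i,j). i \<in> {1..n} \<and> j \<in> {1..n} \<and> i \<noteq> j}. (cmod (B (y i) (y j)))^2))"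
proof -
  define I where "I = {1..n}"
  have fin: "finite I" unfolding I_def by simp
  have addr: "B x (u+v) = B x u + B x v" for x u v using addl[of u v x] sy by (metis complex_cnj_add)
  have smr: "B x (smul a u) = cnj a * B x u" for x u a using sml[of a u x] sy by (metis complex_cnj_mult)
  have z0: "B x 0 = 0" for x using addr[of x 0 0] by simp
  have sumr: "B x (sum f A) = (\<Sum>i\<in>A. B x (f i))" for x and f :: "nat \<Rightarrow> 'a" and A
    by (induction A rule: infinite_finite_induct) (simp_all add: z0 addr)
  define c where "c i = B x (y i)" for i
  define S where "S = (\<Sum>i\<in>I. (cmod (c i))^2)"
  define w where "w = (\<Sum>i\<in>I. smul (c i) (y i))"
  define M where "M = Max ((\<lambda>i. Re (B (y i) (y i))) ` I)"
  define T where "T = (\<Sum>(i,j)\<in>{(i,j). i \<in> I \<and> j \<in> I \<and> i \<noteq> j}. (cmod (B (y i) (y j)))^2)"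
  have Bxw: "B x w = of_real S"
  proof -
    have "B x w = (\<Sum>i\<in>I. cnj (c i) * c i)" unfolding w_def sumr smr by (simp add: c_def)
    also have "\<dots> = (\<Sum>i\<in>I. of_real ((cmod (c i))^2))"
      by (intro sum.cong refl) (simp add: complex_norm_square mult.commute del: of_real_power)
    finally show ?thesis unfolding S_def by simp
  qed
  have "B w x = cnj (B x w)" by (rule sy)
  then have Bwx: "B w x = of_real S" unfolding Bxw by simp
  have Bww: "B w w = (\<Sum>i\<in>I. \<Sum>j\<in>I. c i * cnj (c j) * B (y i) (y j))"
  proof -
    have l0: "B 0 v = 0" for v using addl[of 0 0 v] by simp
    have suml: "B (sum f A) v = (\<Sum>i\<in>A. B (f i) v)" for v and f :: "nat \<Rightarrow> 'a" and A
      by (induction A rule: infinite_finite_induct) (simp_all add: l0 addl)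
    have "B w w = (\<Sum>i\<in>I. c i * B (y i) w)"
      by (subst (1) w_def) (simp add: suml sml)
    also have "\<dots> = (\<Sum>i\<in>I. \<Sum>j\<in>I. c i * cnj (c j) * B (y i) (y j))"
      unfolding w_def sumr smr by (simp add: sum_distrib_left mult.assoc)
    finally show ?thesis .
  qed
  have Mge: "Re (B (y i) (y i)) \<le> M" if "i \<in> I" for i unfolding M_def using fin that by simp
  have W: "Re (B w w) \<le> S * (M + sqrt T)" unfolding Bww S_def T_def by (rule bound_complex[OF fin Mge])
  have K0: "0 \<le> M + sqrt T"
  proof -
    have "1 \<in> I" using n unfolding I_def by simp
    hence "0 \<le> M" using Mge nn order_trans by blast
    moreover have "0 \<le> T" unfolding T_def by (simp add: sum_nonneg case_prod_beta)
    ultimately show ?thesis by simp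
  qed
  have q: "0 \<le> Re (B x x) - 2*t*S + t^2 * Re (B w w)" for t
  proof -
    have "0 \<le> Re (B (x + smul (of_real (-t)) w) (x + smul (of_real (-t)) w))" by (rule nn)
    also have "B (x + smul (of_real (-t)) w) (x + smul (of_real (-t)) w)
       = B x x - of_real t * B w x - of_real t * B x w + of_real t * of_real t * B w w"
      unfolding addl addr sml smr by (simp add: algebra_simps)
    also have "Re \<dots> = Re (B x x) - 2*t*S + t^2 * Re (B w w)"
      unfolding Bxw Bwx by (simp add: power2_eq_square)
    finally show ?thesis .
  qed
  have "S \<le> Re (B x x) * (M + sqrt T)"
    by (rule key_real[OF q W]) (use K0 in \<open>simp_all add: S_def sum_nonneg\<close>)
  then show ?thesis unfolding S_def M_def T_def c_def I_def by simp
qed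

theorem mainTheorem1:
  shows "(\<forall>(smul :: real \<Rightarrow> 'a::ab_group_add \<Rightarrow> 'a) ip (n::nat) x y z.
            real_2ip smul ip \<and> 0 < n \<longrightarrow>
            (\<Sum>i=1..n. \<bar>ip x (y i) z\<bar>^2)
              \<le> (r2norm ip x z)^2 *
                 (Max ((\<lambda>i. (r2norm ip (y i) z)^2) ` {1..n})
                  + sqrt (\<Sum>(i,j)\<in>{(i,j). i \<in> {1..n} \<and> j \<in> {1..n} \<and> i \<noteq> j}.
                            \<bar>ip (y i) (y j) z\<bar>^2)))
       \<and> (\<forall>(smul :: complex \<Rightarrow> 'b::ab_group_add \<Rightarrow> 'b) ip (n::nat) x y z.
            complex_2ip smul ip \<and> 0 < n \<longrightarrow>
            (\<Sum>i=1..n. (cmod (ip x (y i) z))^2)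
              \<le> (c2norm ip x z)^2 *
                 (Max ((\<lambda>i. (c2norm ip (y i) z)^2) ` {1..n})
                  + sqrt (\<Sum>(i,j)\<in>{(i,j). i \<in> {1..n} \<and> j \<in> {1..n} \<and> i \<noteq> j}.
                            (cmod (ip (y i) (y j) z))^2)))"
proof (intro conjI allI impI)
  fix smul :: "real \<Rightarrow> 'a::ab_group_add \<Rightarrow> 'a" and ip and n :: nat and x z :: 'a and y :: "nat \<Rightarrow> 'a"
  assume a: "real_2ip smul ip \<and> 0 < n"
  then have ax: "two_ip_axioms smul (\<lambda>r. r) (\<lambda>r. r \<ge> 0) ip" unfolding real_2ip_def by simp
  let ?B = "\<lambda>u v. ip u v z"
  have nn: "\<And>u. 0 \<le> ?B u u" using ax unfolding two_ip_axioms_def by blast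
  have r: "(\<Sum>i=1..n. \<bar>?B x (y i)\<bar>^2) \<le> ?B x x * (Max ((\<lambda>i. ?B (y i) (y i)) ` {1..n})
     + sqrt (\<Sum>(i,j)\<in>{(i,j). i \<in> {1..n} \<and> j \<in> {1..n} \<and> i \<noteq> j}. \<bar>?B (y i) (y j)\<bar>^2))"
  proof (rule bomb_real[where smul=smul])
    show "\<And>u u' v. ?B (u+u') v = ?B u v + ?B u' v" using ax unfolding two_ip_axioms_def by blast
    show "\<And>c u v. ?B (smul c u) v = c * ?B u v" using ax unfolding two_ip_axioms_def by blast
    show "\<And>u v. ?B v u = ?B u v" using ax unfolding two_ip_axioms_def by blast
  qed (use nn a in auto)
  have e: "(r2norm ip u z)^2 = ?B u u" for u unfolding r2norm_def using nn[of u] by simp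
  show "(\<Sum>i=1..n. \<bar>ip x (y i) z\<bar>^2)
              \<le> (r2norm ip x z)^2 *
                 (Max ((\<lambda>i. (r2norm ip (y i) z)^2) ` {1..n})
                  + sqrt (\<Sum>(i,j)\<in>{(i,j). i \<in> {1..n} \<and> j \<in> {1..n} \<and> i \<noteq> j}.
                            \<bar>ip (y i) (y j) z\<bar>^2))"
    unfolding e using r by simp
next
  fix smul :: "complex \<Rightarrow> 'b::ab_group_add \<Rightarrow> 'b" and ip and n :: nat and x z :: 'b and y :: "nat \<Rightarrow> 'b"
  assume a: "complex_2ip smul ip \<and> 0 < n"
  then have ax: "two_ip_axioms smul cnj (\<lambda>c. c \<in> \<real> \<and> Re c \<ge> 0) ip" unfolding complex_2ip_def by simp
  let ?B = "\<lambda>u v. ip u v z"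
  have nn: "\<And>u. 0 \<le> Re (?B u u)" using ax unfolding two_ip_axioms_def by blast
  have r: "(\<Sum>i=1..n. (cmod (?B x (y i)))^2) \<le> Re (?B x x) * (Max ((\<lambda>i. Re (?B (y i) (y i))) ` {1..n})
     + sqrt (\<Sum>(i,j)\<in>{(i,j). i \<in> {1..n} \<and> j \<in> {1..n} \<and> i \<noteq> j}. (cmod (?B (y i) (y j)))^2))"
  proof (rule bomb_complex[where smul=smul])
    show "\<And>u u' v. ?B (u+u') v = ?B u v + ?B u' v" using ax unfolding two_ip_axioms_def by blast
    show "\<And>c u v. ?B (smul c u) v = c * ?B u v" using ax unfolding two_ip_axioms_def by blast
    show "\<And>u v. ?B v u = cnj (?B u v)" using ax unfolding two_ip_axioms_def by blast
  qed (use nn a in auto)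
  have e: "(c2norm ip u z)^2 = Re (?B u u)" for u unfolding c2norm_def using nn[of u] by simp
  show "(\<Sum>i=1..n. (cmod (ip x (y i) z))^2)
              \<le> (c2norm ip x z)^2 *
                 (Max ((\<lambda>i. (c2norm ip (y i) z)^2) ` {1..n})
                  + sqrt (\<Sum>(i,j)\<in>{(i,j). i \<in> {1..n} \<and> j \<in> {1..n} \<and> i \<noteq> j}.
                            (cmod (ip (y i) (y j) z))^2))"
    unfolding e using r by simp
qed

end
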